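(* Let $D$ be a real division algebra with $\dim_{\mathbb{R}} D \geq 2$, and let $n \geq 0$. Let \[ f_n : D^n \times D^n \to D^n,\quad ((a_1,\ldots,a_n),(b_1,\ldots,b_n)) \mapsto (a_1 b_1, \ldots, a_n b_n) \] be componentwise multiplication, regarded as an $\mathbb{R}$-bilinear map. Then $Q(f_n) \leq n d$, where $d = \tfrac{1}{2}\dim_{\mathbb{R}} D$.
   Context: A real division algebra is a finite-dimensional real vector space $D$ with an $\mathbb{R}$-bilinear multiplication $D \times D \to D$, $(a,b)\mapsto ab$, such that for every nonzero $a \in D$ the left multiplication $b \mapsto ab$ is invertible; no associativity or other conditions are imposed. For an $\mathbb{R}$-bilinear map $f : U \times V \to W$ between finite-dimensional real vector spaces, its subrank $Q(f)$ is the largest $r$ such that there exist $\mathbb{R}$-linear maps $\varphi_1 : \mathbb{R}^r \to U$, $\varphi_2 : \mathbb{R}^r \to V$, $\varphi_3 : W \to \mathbb{R}^r$ with $\varphi_3(f(\varphi_1(a), \varphi_2(b))) = (a_1b_1,\ldots,a_rb_r)$ for all $a,b \in \mathbb{R}^r$ (equivalently, the subrank of the corresponding tensor in $U^*\otimes V^*\otimes W$). *)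

theory Defs
  imports "HOL-Analysis.Analysis" "HOL-Library.Function_Algebras"
begin

instantiation "fun" :: (type, real_vector) real_vector
begin
definition scaleR_fun_def: "scaleR r f = (\<lambda>x. r *\<^sub>R f x)"
instance by standard (auto simp: scaleR_fun_def fun_eq_iff scaleR_add_right scaleR_add_left)
end

definition real_division_algebra :: "('a::euclidean_space \<Rightarrow> 'a \<Rightarrow> 'a) \<Rightarrow> bool" where
  "real_division_algebra m \<longleftrightarrow> bilinear m \<and> (\<forall>a. a \<noteq> 0 \<longrightarrow> bij (m a))"

text \<open>D^n as the subspace of functions nat => D supported in {..<n}.\<close>

definition tuples :: "nat \<Rightarrow> (nat \<Rightarrow> 'a::real_vector) set" where
  "tuples n = {x. \<forall>k\<ge>n. x k = 0}"

definition cw_mult :: "('a \<Rightarrow> 'a \<Rightarrow> 'a) \<Rightarrow> (nat \<Rightarrow> 'a) \<Rightarrow> (nat \<Rightarrow> 'a) \<Rightarrow> (nat \<Rightarrow> 'a)" where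
  "cw_mult m x y = (\<lambda>k. m (x k) (y k))"

text \<open>A linear map
  phi1 : R^r -> U is given by the images u 0, ..., u (r-1) of the standard basis, similarly
  phi2 by v, and a linear map phi3 : W -> R^r by its r coordinate functionals psi k, each
  linear on W.  The condition is phi3 (f (phi1 a) (phi2 b)) = (a_1 b_1, ..., a_r b_r).\<close>

definition subrank_witness ::
  "'u::real_vector set \<Rightarrow> 'v::real_vector set \<Rightarrow> 'w::real_vector set \<Rightarrow> ('u \<Rightarrow> 'v \<Rightarrow> 'w) \<Rightarrow> nat \<Rightarrow> bool" where
  "subrank_witness U V W f r \<longleftrightarrow>
     (\<exists>u v psi.
        (\<forall>i<r. u i \<in> U \<and> v i \<in> V) \<and>
        (\<forall>k<r. (\<forall>x\<in>W. \<forall>y\<in>W. psi k (x + y) = psi k x + psi k y) \<and>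
               (\<forall>c. \<forall>x\<in>W. psi k (c *\<^sub>R x) = c * psi k x)) \<and>
        (\<forall>a b :: nat \<Rightarrow> real. \<forall>k<r.
            psi k (f (\<Sum>i<r. a i *\<^sub>R u i) (\<Sum>i<r. b i *\<^sub>R v i)) = a k * b k))"

definition subrank ::
  "'u::real_vector set \<Rightarrow> 'v::real_vector set \<Rightarrow> 'w::real_vector set \<Rightarrow> ('u \<Rightarrow> 'v \<Rightarrow> 'w) \<Rightarrow> nat" where
  "subrank U V W f = (GREATEST r. subrank_witness U V W f r)"

end

theory Submission
  imports Defs Jordan_Normal_Form.Determinant
begin


lemma det_mat_cont:
  fixes F :: "real \<Rightarrow> nat \<times> nat \<Rightarrow> real"
  assumes "\<And>i j. continuous_on S (\<lambda>t. F t (i,j))"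
  shows "continuous_on S (\<lambda>t. Determinant.det (Matrix.mat N N (F t)))"
proof -
  have eq: "Determinant.det (Matrix.mat N N (F t)) =
     (\<Sum>p \<in> {p. p permutes {0..<N}}. of_int (sign p) * (\<Prod>i = 0..<N. F t (i, p i)))" for t
  proof -
    have "Determinant.det (Matrix.mat N N (F t)) =
     (\<Sum>p \<in> {p. p permutes {0..<N}}. of_int (sign p) * (\<Prod>i = 0..<N. Matrix.mat N N (F t) $$ (i, p i)))"
      by (rule det_def') auto
    also have "\<dots> = (\<Sum>p \<in> {p. p permutes {0..<N}}. of_int (sign p) * (\<Prod>i = 0..<N. F t (i, p i)))"
    proof (rule sum.cong[OF refl], goal_cases)
      case (1 p)
      then have "\<And>i. i < N \<Longrightarrow> p i < N" by (simp add: permutes_in_image)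
      then show ?case by (auto intro!: prod.cong)
    qed
    finally show ?thesis .
  qed
  show ?thesis unfolding eq
    by (intro continuous_intros assms)
qed

lemma bil_rsum: "bilinear h \<Longrightarrow> h x (sum g S) = (\<Sum>a\<in>S. h x (g a))"
  unfolding bilinear_def by (simp add: linear_sum)
lemma bil_lsum: "bilinear h \<Longrightarrow> h (sum g S) y = (\<Sum>a\<in>S. h (g a) y)"
  unfolding bilinear_def using linear_sum[of "\<lambda>x. h x y"] by blast

lemma DA_even:
  fixes m :: "'a::euclidean_space \<Rightarrow> 'a \<Rightarrow> 'a"
  assumes DA: "real_division_algebra m" and D2: "DIM('a) \<ge> 2"
  shows "even DIM('a)"
proof (rule ccontr)
  assume odd: "\<not> even DIM('a)"
  have bil: "bilinear m" and bij: "\<And>a. a \<noteq> 0 \<Longrightarrow> bij (m a)"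
    using DA unfolding real_division_algebra_def by auto
  obtain bs where bs: "set bs = (Basis :: 'a set)" "distinct bs"
    using finite_distinct_list[OF finite_Basis] by blast
  define N where "N = length bs"
  have N: "N = DIM('a)" unfolding N_def using distinct_card[OF bs(2)] bs(1) by simp
  have bsB: "i < N \<Longrightarrow> bs ! i \<in> Basis" for i using bs(1) nth_mem unfolding N_def by blast
  have bsinner: "i < N \<Longrightarrow> j < N \<Longrightarrow> inner (bs ! i) (bs ! j) = (if i = j then 1 else 0)" for i j
    using bsB[of i] bsB[of j] bs(2) unfolding N_def
    by (simp add: inner_Basis nth_eq_iff_index_eq)
  define M where "M z = Matrix.mat N N (\<lambda>(i,j). inner (m z (bs ! j)) (bs ! i))" for z
  have sing: "z = 0" if "Determinant.det (M z) = 0" for z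
  proof -
    have "M z \<in> carrier_mat N N" unfolding M_def by simp
    from det_0_iff_vec_prod_zero[OF this] that obtain v where
      v: "v \<in> carrier_vec N" "v \<noteq> 0\<^sub>v N" "M z *\<^sub>v v = 0\<^sub>v N" by auto
    define y where "y = (\<Sum>j<N. vec_index v j *\<^sub>R bs ! j)"
    have iy: "inner y (bs ! i) = vec_index v i" if "i < N" for i
    proof -
      have "inner y (bs ! i) = (\<Sum>j<N. vec_index v j * inner (bs ! j) (bs ! i))"
        unfolding y_def by (simp add: inner_sum_left)
      also have "\<dots> = (\<Sum>j<N. if j = i then vec_index v j else 0)"
        by (rule sum.cong) (use that bsinner in auto)
      also have "\<dots> = vec_index v i" using that by simp
      finally show ?thesis .
    qed
    have "y \<noteq> 0"
    proof
      assume "y = 0"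
      then have "\<And>i. i < N \<Longrightarrow> vec_index v i = 0" using iy by (metis inner_zero_left)
      then have "v = 0\<^sub>v N" using v(1) by (intro eq_vecI) auto
      with v(2) show False by simp
    qed
    have mi: "inner (m z y) (bs ! i) = 0" if "i < N" for i
    proof -
      have "inner (m z y) (bs ! i) = (\<Sum>j<N. vec_index v j * inner (m z (bs ! j)) (bs ! i))"
        unfolding y_def
        by (simp add: bil_rsum[OF bil] bilinear_rmul[OF bil] inner_sum_left)
      also have "\<dots> = vec_index (M z *\<^sub>v v) i"
        using that v(1) unfolding M_def
        by (simp add: mult_mat_vec_def scalar_prod_def row_def lessThan_atLeast0 mult.commute)
      also have "\<dots> = 0" using v(3) that by simp
      finally show ?thesis .
    qed
    have "m z y = 0"
    proof (rule euclidean_eqI)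
      fix b :: 'a assume "b \<in> Basis"
      then have "b \<in> set bs" using bs(1) by simp
      then obtain i where "i < N" "b = bs ! i" unfolding N_def in_set_conv_nth by blast
      then show "inner (m z y) b = inner 0 b" using mi by simp
    qed
    show "z = 0"
    proof (rule ccontr)
      assume "z \<noteq> 0"
      then have "inj (m z)" using bij bij_is_inj by blast
      moreover have "m z 0 = 0" using bilinear_rzero[OF bil] by simp
      ultimately show False using \<open>m z y = 0\<close> \<open>y \<noteq> 0\<close> by (metis injD)
    qed
  qed
  have N2: "N \<ge> 2" using D2 N by simp
  define x where "x = bs ! 0"
  define y where "y = bs ! 1"
  define p where "p t = cos t *\<^sub>R x + sin t *\<^sub>R y" for t
  have pnz: "p t \<noteq> 0" for t
  proof
    assume "p t = 0"
    then have "inner (p t) x = 0" "inner (p t) y = 0" by auto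
    then have "cos t = 0" "sin t = 0" unfolding p_def x_def y_def using bsinner[of 0 0] bsinner[of 1 1]
        bsinner[of 0 1] bsinner[of 1 0] N2
      by (auto simp: inner_add_left)
    then show False using sin_cos_squared_add[of t] by simp
  qed
  define f where "f t = Determinant.det (M (p t))" for t
  have Mp: "M (p t) = Matrix.mat N N (\<lambda>(i,j). cos t * inner (m x (bs ! j)) (bs ! i) + sin t * inner (m y (bs ! j)) (bs ! i))" for t
    unfolding M_def p_def
    by (rule cong[OF refl]) (auto simp: bilinear_ladd[OF bil] bilinear_lmul[OF bil] inner_add_left)
  have cont: "continuous_on {0..pi} f"
    unfolding f_def Mp by (rule det_mat_cont) (auto intro!: continuous_intros)
  have "M (p pi) = (-1) \<cdot>\<^sub>m M (p 0)"
    unfolding M_def p_def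
    by (rule eq_matI) (auto simp: bilinear_lneg[OF bil])
  then have fpi: "f pi = - f 0" unfolding f_def using odd N
    by (simp add: M_def)
  have f0: "f 0 \<noteq> 0" using sing pnz unfolding f_def by blast
  define g where "g t = f 0 * f t" for t
  have "g 0 > 0" unfolding g_def using f0 by (smt (verit) zero_less_mult_iff)
  moreover have "g pi < 0"
  proof -
    have "g pi = - g 0" unfolding g_def fpi by simp
    then show ?thesis using \<open>g 0 > 0\<close> by simp
  qed
  moreover have "continuous_on {0..pi} g" unfolding g_def by (intro continuous_intros cont)
  ultimately obtain t where "0 \<le> t" "t \<le> pi" "g t = 0"
    using IVT2'[of g pi 0 0] by fastforce
  then have "f t = 0" using f0 unfolding g_def by simp
  then show False using sing pnz unfolding f_def by blast
qed



lemma fsum_apply: "finite I \<Longrightarrow> (\<Sum>i\<in>I. f i) x = (\<Sum>i\<in>I. f i x)"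
  by (induction I rule: finite_induct) (auto simp: plus_fun_def)

lemma fscale_apply: "(c *\<^sub>R f) x = c *\<^sub>R f x"
  by (simp add: scaleR_fun_def)

lemma indep_expl:
  fixes B :: "'v::real_vector set"
  shows "finite B \<Longrightarrow> independent B \<Longrightarrow> (\<Sum>v\<in>B. c v *\<^sub>R v) = 0 \<Longrightarrow> v \<in> B \<Longrightarrow> c v = 0"
  using dependent_finite by blast

lemma indep_explI:
  fixes B :: "'v::real_vector set"
  shows "finite B \<Longrightarrow> (\<And>c v. (\<Sum>v\<in>B. c v *\<^sub>R v) = 0 \<Longrightarrow> v \<in> B \<Longrightarrow> c v = 0) \<Longrightarrow> independent B"
  using dependent_finite by blast

lemma gl_basis:
  fixes V :: "'v::real_vector set"
  assumes "V \<subseteq> span F" "finite F"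
  obtains B where "finite B" "B \<subseteq> V" "independent B" "V \<subseteq> span B" "card B = dim V"
proof -
  obtain B where B: "B \<subseteq> V" "independent B" "V \<subseteq> span B" "card B = dim V"
    using basis_exists by blast
  then have "finite B" using independent_span_bound[OF assms(2) B(2)] assms(1) by blast
  with B that show ?thesis by blast
qed

lemma gl_indep_le:
  fixes V :: "'v::real_vector set"
  assumes "V \<subseteq> span F" "finite F" "I \<subseteq> V" "independent I"
  shows "finite I \<and> card I \<le> dim V"
proof -
  obtain B where B: "finite B" "B \<subseteq> V" "independent B" "V \<subseteq> span B" "card B = dim V"
    using gl_basis[OF assms(1,2)] by blast
  show ?thesis using independent_span_bound[OF B(1) assms(4)] assms(3) B(4,5) by auto
qed

lemma gl_mono:
  fixes V :: "'v::real_vector set"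
  assumes "A \<subseteq> V" "V \<subseteq> span F" "finite F"
  shows "dim A \<le> dim V"
proof -
  obtain B where B: "finite B" "B \<subseteq> A" "independent B" "A \<subseteq> span B" "card B = dim A"
    using gl_basis[of A F] assms by blast
  show ?thesis using gl_indep_le[OF assms(2,3), of B] B assms(1) by auto
qed

lemma gl_disjoint_spans:
  fixes B :: "'v::real_vector set"
  assumes "independent B" "finite B" "E \<subseteq> B" "N \<subseteq> B" "E \<inter> N = {}" "x \<in> span E" "x \<in> span N"
  shows "x = 0"
proof -
  note fB = assms(2)
  have fE: "finite E" and fN: "finite N" using assms(3,4) fB finite_subset by auto
  obtain a where a: "x = (\<Sum>v\<in>E. a v *\<^sub>R v)" using assms(6) span_finite[OF fE] by auto
  obtain c where c: "x = (\<Sum>v\<in>N. c v *\<^sub>R v)" using assms(7) span_finite[OF fN] by auto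
  define d where "d v = (if v \<in> E then a v else if v \<in> N then - c v else 0)" for v
  have "(\<Sum>v\<in>B. d v *\<^sub>R v) = (\<Sum>v\<in>E \<union> N. d v *\<^sub>R v) + (\<Sum>v\<in>B - (E \<union> N). d v *\<^sub>R v)"
    using fB assms(3,4) by (metis (no_types, lifting) Un_subset_iff sum.subset_diff add.commute)
  also have "(\<Sum>v\<in>B - (E \<union> N). d v *\<^sub>R v) = 0" by (auto simp: d_def intro!: sum.neutral)
  also have "(\<Sum>v\<in>E \<union> N. d v *\<^sub>R v) = (\<Sum>v\<in>E. d v *\<^sub>R v) + (\<Sum>v\<in>N. d v *\<^sub>R v)"
    using fE fN assms(5) by (simp add: sum.union_disjoint)
  also have "(\<Sum>v\<in>E. d v *\<^sub>R v) = x" unfolding a by (auto simp: d_def intro!: sum.cong)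
  also have "(\<Sum>v\<in>N. d v *\<^sub>R v) = - x" unfolding c using assms(5)
    by (auto simp: d_def sum_negf[symmetric] intro!: sum.cong)
  finally have "(\<Sum>v\<in>B. d v *\<^sub>R v) = 0" by simp
  then have "\<forall>v\<in>B. d v = 0" using indep_expl[OF fB assms(1)] by blast
  then have "\<forall>v\<in>E. a v = 0" using assms(3) unfolding d_def by (metis subsetD)
  then show ?thesis unfolding a by simp
qed

lemma gl_rank_nullity:
  fixes f :: "'v::real_vector \<Rightarrow> 'w::real_vector"
  assumes S: "subspace S" "S \<subseteq> span F" "finite F" and lf: "linear f"
  shows "dim S \<le> dim (f ` S) + dim {x\<in>S. f x = 0}"
proof -
  define N where "N = {x\<in>S. f x = 0}"
  have NS: "N \<subseteq> S" unfolding N_def by auto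
  obtain BN where BN: "finite BN" "BN \<subseteq> N" "independent BN" "N \<subseteq> span BN" "card BN = dim N"
    using gl_basis[of N F] NS S by blast
  obtain B where B: "BN \<subseteq> B" "B \<subseteq> S" "independent B" "S \<subseteq> span B"
    using maximal_independent_subset_extend[of BN S] BN NS by blast
  have fB: "finite B" using independent_span_bound[OF S(3) B(3)] B(2) S(2) by blast
  have cB: "card B = dim S" using basis_card_eq_dim[OF B(2,4,3)] .
  define E where "E = B - BN"
  have spE: "span E \<subseteq> S" using B(2) S(1) span_minimal unfolding E_def by blast
  have injE: "inj_on f (span E)"
  proof (subst linear_inj_on_iff_eq_0[OF lf subspace_span], intro ballI impI)
    fix x assume x: "x \<in> span E" "f x = 0"
    then have "x \<in> N" using spE unfolding N_def by auto
    then have "x \<in> span BN" using BN by auto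
    then show "x = 0" using gl_disjoint_spans[OF B(3) fB, of E BN x] x B(1) unfolding E_def by auto
  qed
  have indE: "independent E" using B(3) independent_mono unfolding E_def by blast
  have ind_fE: "independent (f ` E)" using linear_independent_injective_image[OF lf indE injE] .
  have cfE: "card (f ` E) = card E"
    using card_image inj_on_subset[OF injE span_superset] by blast
  have fS: "f ` S \<subseteq> span (f ` F)" using S(2) span_linear_image[OF lf] by auto
  have "card (f ` E) \<le> dim (f ` S)"
    using gl_indep_le[OF fS _ _ ind_fE] S(3) B(2) unfolding E_def by blast
  moreover have "card B = card BN + card E"
    unfolding E_def using fB B(1) by (metis card_Diff_subset card_mono le_add_diff_inverse finite_subset)
  ultimately show ?thesis using cB BN(5) cfE unfolding N_def by linarith
qed

lemma gl_trivial_inter: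
  fixes U1 :: "'v::real_vector set"
  assumes "subspace U1" "subspace U2" "U1 \<subseteq> span F" "U2 \<subseteq> span F" "finite F"
    and "\<And>x. x \<in> U1 \<Longrightarrow> x \<in> U2 \<Longrightarrow> x = 0"
  shows "dim U1 + dim U2 \<le> card F"
proof -
  obtain B1 where B1: "finite B1" "B1 \<subseteq> U1" "independent B1" "U1 \<subseteq> span B1" "card B1 = dim U1"
    using gl_basis[of U1 F] assms by blast
  obtain B2 where B2: "finite B2" "B2 \<subseteq> U2" "independent B2" "U2 \<subseteq> span B2" "card B2 = dim U2"
    using gl_basis[of U2 F] assms by blast
  have disj: "B1 \<inter> B2 = {}"
  proof (rule ccontr)
    assume "B1 \<inter> B2 \<noteq> {}"
    then obtain z where "z \<in> B1" "z \<in> B2" by blast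
    then have "z = 0" using assms(6) B1(2) B2(2) by blast
    then show False using \<open>z \<in> B1\<close> B1(3) dependent_zero by blast
  qed
  have ind: "independent (B1 \<union> B2)"
  proof (rule indep_explI)
    show "finite (B1 \<union> B2)" using B1 B2 by simp
    fix c v assume sc: "(\<Sum>v\<in>B1 \<union> B2. c v *\<^sub>R v) = 0"
    define y where "y = (\<Sum>v\<in>B1. c v *\<^sub>R v)"
    have "(\<Sum>v\<in>B1 \<union> B2. c v *\<^sub>R v) = y + (\<Sum>v\<in>B2. c v *\<^sub>R v)"
      unfolding y_def using B1(1) B2(1) disj by (simp add: sum.union_disjoint)
    then have y2: "(\<Sum>v\<in>B2. c v *\<^sub>R v) = - y" using sc by (simp add: eq_neg_iff_add_eq_0 add.commute)
    have y1: "y \<in> U1" unfolding y_def using B1(2) assms(1)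
      by (intro subspace_sum subspace_scale) auto
    have "- y \<in> U2" unfolding y2[symmetric] using B2(2) assms(2)
      by (intro subspace_sum subspace_scale) auto
    then have "y \<in> U2" using assms(2) subspace_neg by fastforce
    then have y0: "y = 0" using y1 assms(6) by blast
    have c1: "\<forall>v\<in>B1. c v = 0" using indep_expl[OF B1(1,3)] y0 unfolding y_def by blast
    have "(\<Sum>v\<in>B2. c v *\<^sub>R v) = 0" using y2 y0 by simp
    then have c2: "\<forall>v\<in>B2. c v = 0" using indep_expl[OF B2(1,3)] by blast
    assume "v \<in> B1 \<union> B2"
    then show "c v = 0" using c1 c2 by blast
  qed
  have "B1 \<union> B2 \<subseteq> span F" using B1(2) B2(2) assms(3,4) by blast
  then have "card (B1 \<union> B2) \<le> card F" using independent_span_bound[OF assms(5) ind] by blast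
  then show ?thesis using B1(1,5) B2(1,5) disj by (simp add: card_Un_disjoint)
qed


definition R0 :: "nat \<Rightarrow> (nat \<Rightarrow> real) set" where "R0 r = {b. \<forall>j\<ge>r. b j = 0}"
definition ee :: "nat \<Rightarrow> nat \<Rightarrow> real" where "ee j = (\<lambda>i. if i = j then 1 else 0)"

lemma inj_ee: "inj ee"
proof (rule injI)
  fix a b assume "ee a = ee b"
  then have "ee a a = ee b a" by simp
  then show "a = b" unfolding ee_def by (auto split: if_splits)
qed

lemma sum_ee: "finite A \<Longrightarrow> (\<Sum>j\<in>A. c j *\<^sub>R ee j) i = (if i \<in> A then c i else 0)"
proof -
  assume fA: "finite A"
  have "(\<Sum>j\<in>A. c j *\<^sub>R ee j) i = (\<Sum>j\<in>A. if i = j then c j else 0)"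
    by (simp add: fsum_apply[OF fA] fscale_apply ee_def, rule sum.cong, auto)
  also have "\<dots> = (if i \<in> A then c i else 0)" using fA by (simp add: sum.delta)
  finally show ?thesis .
qed

lemma R0_span: "R0 r \<subseteq> span (ee ` {..<r})"
proof
  fix b assume b: "b \<in> R0 r"
  have "b = (\<Sum>j\<in>{..<r}. b j *\<^sub>R ee j)"
  proof
    fix i show "b i = (\<Sum>j\<in>{..<r}. b j *\<^sub>R ee j) i"
      using b unfolding R0_def by (simp add: sum_ee)
  qed
  also have "\<dots> \<in> span (ee ` {..<r})"
    by (intro span_sum span_scale span_base) auto
  finally show "b \<in> span (ee ` {..<r})" .
qed

lemma ee_indep: "finite A \<Longrightarrow> independent (ee ` A)"
proof (rule indep_explI)
  assume fA: "finite A"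
  then show "finite (ee ` A)" by simp
  fix c v assume s: "(\<Sum>v\<in>ee ` A. c v *\<^sub>R v) = 0" and v: "v \<in> ee ` A"
  then obtain j where j: "j \<in> A" "v = ee j" by blast
  have "(\<Sum>v\<in>ee ` A. c v *\<^sub>R v) = (\<Sum>i\<in>A. c (ee i) *\<^sub>R ee i)"
    using sum.reindex[OF inj_on_subset[OF inj_ee], of A "\<lambda>v. c v *\<^sub>R v"] by simp
  then have "(\<Sum>i\<in>A. c (ee i) *\<^sub>R ee i) j = 0" using s by simp
  then show "c v = 0" using j fA by (simp add: sum_ee)
qed

lemma subspace_R0: "subspace (R0 r)"
  unfolding subspace_def R0_def by (auto simp: fscale_apply)

lemma dim_ge_R0:
  assumes "ee ` A \<subseteq> S" "S \<subseteq> R0 r" "finite A"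
  shows "card A \<le> dim S"
proof -
  have "card (ee ` A) \<le> dim S"
    using gl_indep_le[of S "ee ` {..<r}" "ee ` A"] assms R0_span ee_indep by blast
  then show ?thesis using card_image[OF inj_on_subset[OF inj_ee]] by simp
qed

lemma linear_eval: "linear (\<lambda>b::nat \<Rightarrow> real. b k)"
  by (rule linearI) (auto simp: fscale_apply)

lemma echelon:
  "subspace S \<Longrightarrow> S \<subseteq> R0 r \<Longrightarrow> t \<le> dim S \<Longrightarrow>
   \<exists>k s. (\<forall>l<t. s l \<in> S) \<and> (\<forall>l<t. \<forall>l'<t. s l (k l') = (if l = l' then 1 else 0))"
proof (induction t arbitrary: S)
  case 0
  then show ?case by auto
next
  case (Suc t)
  have "\<exists>s0\<in>S. s0 \<noteq> 0"
  proof (rule ccontr)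
    assume "\<not> ?thesis"
    then have "S \<subseteq> span {}" by auto
    then have "dim S \<le> 0" using dim_le_card[of S "{}"] by simp
    then show False using Suc.prems by simp
  qed
  then obtain s0 where s0: "s0 \<in> S" "s0 \<noteq> 0" by blast
  then obtain k0 where k0: "s0 k0 \<noteq> 0"
  proof -
    assume h: "\<And>k0. s0 k0 \<noteq> 0 \<Longrightarrow> thesis"
    show thesis
    proof (rule ccontr)
      assume "\<not> thesis"
      then have "\<forall>k. s0 k = 0" using h by blast
      then have "s0 = 0" by (simp add: fun_eq_iff)
      then show False using s0(2) by simp
    qed
  qed
  define s1 where "s1 = (1 / s0 k0) *\<^sub>R s0"
  have s1: "s1 \<in> S" "s1 k0 = 1" unfolding s1_def using s0 k0 Suc.prems(1)
    by (auto simp: subspace_scale fscale_apply)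
  define S' where "S' = {b\<in>S. b k0 = 0}"
  have subS': "subspace S'" using Suc.prems(1) unfolding S'_def subspace_def
    by (auto simp: fscale_apply)
  have S'R: "S' \<subseteq> R0 r" using Suc.prems(2) unfolding S'_def by auto
  have "dim S \<le> dim ((\<lambda>b. b k0) ` S) + dim S'"
    using gl_rank_nullity[OF Suc.prems(1) _ _ linear_eval, of "ee ` {..<r}" k0] Suc.prems(2) R0_span
    unfolding S'_def by auto
  moreover have "dim ((\<lambda>b::nat\<Rightarrow>real. b k0) ` S) \<le> 1"
  proof -
    have "(\<lambda>b::nat\<Rightarrow>real. b k0) ` S \<subseteq> span {1::real}"
    proof
      fix y :: real assume "y \<in> (\<lambda>b::nat\<Rightarrow>real. b k0) ` S"
      have "y = y *\<^sub>R 1" by simp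
      also have "\<dots> \<in> span {1::real}" by (intro span_scale span_base) simp
      finally show "y \<in> span {1::real}" .
    qed
    then show ?thesis using dim_le_card[of "(\<lambda>b::nat\<Rightarrow>real. b k0) ` S" "{1::real}"] by simp
  qed
  ultimately have "t \<le> dim S'" using Suc.prems(3) by linarith
  from Suc.IH[OF subS' S'R this] obtain k s where
    ks: "\<forall>l<t. s l \<in> S'" "\<forall>l<t. \<forall>l'<t. s l (k l') = (if l = l' then 1 else 0)" by blast
  define s2 where "s2 = s1 - (\<Sum>m<t. s1 (k m) *\<^sub>R s m)"
  have s2S: "s2 \<in> S" unfolding s2_def using s1(1) ks(1) Suc.prems(1) unfolding S'_def
    by (intro subspace_diff subspace_sum subspace_scale) auto
  have sk0: "l < t \<Longrightarrow> s l k0 = 0" for l using ks(1) unfolding S'_def by auto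
  have s2k0: "s2 k0 = 1" unfolding s2_def using sk0 s1(2)
    by (simp add: fsum_apply fscale_apply)
  have s2k: "l' < t \<Longrightarrow> s2 (k l') = 0" for l'
  proof -
    assume l': "l' < t"
    have "(\<Sum>m<t. s1 (k m) *\<^sub>R s m) (k l') = (\<Sum>m<t. s1 (k m) * s m (k l'))"
      by (simp add: fsum_apply fscale_apply)
    also have "\<dots> = (\<Sum>m<t. if m = l' then s1 (k m) else 0)"
      by (rule sum.cong) (use ks(2) l' in auto)
    also have "\<dots> = s1 (k l')" using l' by simp
    finally show ?thesis unfolding s2_def by simp
  qed
  define k' where "k' = case_nat k0 k"
  define s' where "s' = case_nat s2 s"
  show ?case
  proof (intro exI[of _ k'] exI[of _ s'] conjI allI impI)
    fix l assume "l < Suc t"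
    then show "s' l \<in> S" unfolding s'_def using s2S ks(1) unfolding S'_def
      by (cases l) auto
  next
    fix l l' assume l: "l < Suc t" and l': "l' < Suc t"
    show "s' l (k' l') = (if l = l' then 1 else 0)"
      unfolding s'_def k'_def
      using l l' s2k0 s2k sk0 ks(2) by (cases l; cases l') auto
  qed
qed



definition wit :: "('a::euclidean_space \<Rightarrow> 'a \<Rightarrow> 'a) \<Rightarrow> nat set \<Rightarrow> nat \<Rightarrow> (nat \<Rightarrow> nat \<Rightarrow> 'a)
   \<Rightarrow> (nat \<Rightarrow> nat \<Rightarrow> 'a) \<Rightarrow> (nat \<Rightarrow> nat \<Rightarrow> 'a) \<Rightarrow> bool" where
  "wit m K r u v g \<longleftrightarrow> (\<forall>i<r. \<forall>j<r. \<forall>k<r.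
     (\<Sum>c\<in>K. inner (m (u i c) (v j c)) (g k c)) = (if i = j \<and> j = k then 1 else 0))"

lemma pair_expand:
  fixes m :: "'a::euclidean_space \<Rightarrow> 'a \<Rightarrow> 'a"
  assumes bil: "bilinear m"
  shows "(\<Sum>c\<in>C. inner (m (x c) (\<Sum>j<r. b j *\<^sub>R v j c)) (\<Sum>k<r. y k *\<^sub>R g k c))
       = (\<Sum>j<r. \<Sum>k<r. b j * y k * (\<Sum>c\<in>C. inner (m (x c) (v j c)) (g k c)))"
proof -
  have "(\<Sum>c\<in>C. inner (m (x c) (\<Sum>j<r. b j *\<^sub>R v j c)) (\<Sum>k<r. y k *\<^sub>R g k c))
      = (\<Sum>c\<in>C. \<Sum>k<r. \<Sum>j<r. y k * (b j * inner (m (x c) (v j c)) (g k c)))"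
    by (simp add: bil_rsum[OF bil] bilinear_rmul[OF bil] inner_sum_left inner_sum_right
        sum_distrib_left mult.assoc)
  also have "\<dots> = (\<Sum>c\<in>C. \<Sum>j<r. \<Sum>k<r. b j * y k * inner (m (x c) (v j c)) (g k c))"
    by (rule sum.cong[OF refl], subst sum.swap, simp add: ac_simps)
  also have "\<dots> = (\<Sum>j<r. \<Sum>c\<in>C. \<Sum>k<r. b j * y k * inner (m (x c) (v j c)) (g k c))"
    by (rule sum.swap)
  also have "\<dots> = (\<Sum>j<r. \<Sum>k<r. \<Sum>c\<in>C. b j * y k * inner (m (x c) (v j c)) (g k c))"
    by (rule sum.cong[OF refl], rule sum.swap)
  also have "\<dots> = (\<Sum>j<r. \<Sum>k<r. b j * y k * (\<Sum>c\<in>C. inner (m (x c) (v j c)) (g k c)))"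
    by (simp add: sum_distrib_left)
  finally show ?thesis .
qed


lemma wit_K_C:
  fixes m :: "'a::euclidean_space \<Rightarrow> 'a \<Rightarrow> 'a"
  assumes bil: "bilinear m" and fin: "finite K" and C: "C \<subseteq> K"
    and z: "\<And>c. c \<in> C \<Longrightarrow> inner (m (x c) (y c)) (z c) = 0"
  shows "(\<Sum>c\<in>K - C. inner (m (x c) (y c)) (z c)) = (\<Sum>c\<in>K. inner (m (x c) (y c)) (z c))"
proof -
  have "(\<Sum>c\<in>K. inner (m (x c) (y c)) (z c)) = (\<Sum>c\<in>K - C. inner (m (x c) (y c)) (z c)) + (\<Sum>c\<in>C. inner (m (x c) (y c)) (z c))"
    using sum.subset_diff[OF C fin] by simp
  also have "(\<Sum>c\<in>C. inner (m (x c) (y c)) (z c)) = 0" using z by simp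
  finally show ?thesis by simp
qed

lemma delta_sum: "(k::nat) < r \<Longrightarrow> (\<Sum>j<r. s j * (if a = j \<and> j = k then 1 else 0)) = (if a = k then s k else (0::real))"
proof -
  assume k: "k < r"
  have "(\<Sum>j<r. s j * (if a = j \<and> j = k then 1 else 0)) = (\<Sum>j<r. if j = k then (if a = k then s k else 0) else 0)"
    by (rule sum.cong) auto
  also have "\<dots> = (if a = k then s k else 0)"
    using k by simp
  finally show ?thesis .
qed

lemma redV:
  fixes m :: "'a::euclidean_space \<Rightarrow> 'a \<Rightarrow> 'a"
  assumes bil: "bilinear m" and W: "wit m K r u v g" and fin: "finite K" and C: "C \<subseteq> K"
    and sR: "\<forall>l<t. s l \<in> R0 r"
    and sC: "\<forall>l<t. \<forall>c\<in>C. (\<Sum>j<r. s l j *\<^sub>R v j c) = 0"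
    and ks: "\<forall>l<t. \<forall>l'<t. s l (k l') = (if l = l' then 1 else 0)"
  shows "wit m (K - C) t (\<lambda>l. u (k l)) (\<lambda>l c. \<Sum>j<r. s l j *\<^sub>R v j c) (\<lambda>l. g (k l))"
  unfolding wit_def
proof (intro allI impI)
  fix l l' l'' assume l: "l < t" and l': "l' < t" and l'': "l'' < t"
  have kr: "k a < r" if "a < t" for a
  proof (rule ccontr)
    assume "\<not> k a < r"
    then have "s a (k a) = 0" using sR that unfolding R0_def by auto
    then show False using ks that by auto
  qed
  have kinj: "k a = k b \<longleftrightarrow> a = b" if "a < t" "b < t" for a b
    using ks that by (metis one_neq_zero)
  have "(\<Sum>c\<in>K - C. inner (m (u (k l) c) (\<Sum>j<r. s l' j *\<^sub>R v j c)) (g (k l'') c))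
      = (\<Sum>c\<in>K. inner (m (u (k l) c) (\<Sum>j<r. s l' j *\<^sub>R v j c)) (g (k l'') c))"
    by (rule wit_K_C[OF bil fin C]) (use sC l' bilinear_rzero[OF bil] in auto)
  also have "\<dots> = (\<Sum>c\<in>K. \<Sum>j<r. s l' j * inner (m (u (k l) c) (v j c)) (g (k l'') c))"
    by (simp add: bil_rsum[OF bil] bilinear_rmul[OF bil] inner_sum_left)
  also have "\<dots> = (\<Sum>j<r. s l' j * (\<Sum>c\<in>K. inner (m (u (k l) c) (v j c)) (g (k l'') c)))"
    by (subst sum.swap) (simp add: sum_distrib_left)
  also have "\<dots> = (\<Sum>j<r. s l' j * (if k l = j \<and> j = k l'' then 1 else 0))"
    by (rule sum.cong[OF refl]) (use W kr[OF l] kr[OF l''] in \<open>simp add: wit_def\<close>)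
  also have "\<dots> = (if k l = k l'' then s l' (k l'') else 0)"
    by (rule delta_sum[OF kr[OF l'']])
  also have "\<dots> = (if l = l' \<and> l' = l'' then 1 else 0)"
    using kinj[OF l l''] ks l' l'' by auto
  finally show "(\<Sum>c\<in>K - C. inner (m (u (k l) c) (\<Sum>j<r. s l' j *\<^sub>R v j c)) (g (k l'') c))
      = (if l = l' \<and> l' = l'' then 1 else 0)" .
qed

lemma redG:
  fixes m :: "'a::euclidean_space \<Rightarrow> 'a \<Rightarrow> 'a"
  assumes bil: "bilinear m" and W: "wit m K r u v g" and fin: "finite K" and C: "C \<subseteq> K"
    and sR: "\<forall>l<t. s l \<in> R0 r"
    and sC: "\<forall>l<t. \<forall>c\<in>C. (\<Sum>j<r. s l j *\<^sub>R g j c) = 0"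
    and ks: "\<forall>l<t. \<forall>l'<t. s l (k l') = (if l = l' then 1 else 0)"
  shows "wit m (K - C) t (\<lambda>l. u (k l)) (\<lambda>l. v (k l)) (\<lambda>l c. \<Sum>j<r. s l j *\<^sub>R g j c)"
  unfolding wit_def
proof (intro allI impI)
  fix l l' l'' assume l: "l < t" and l': "l' < t" and l'': "l'' < t"
  have kr: "k a < r" if "a < t" for a
  proof (rule ccontr)
    assume "\<not> k a < r"
    then have "s a (k a) = 0" using sR that unfolding R0_def by auto
    then show False using ks that by auto
  qed
  have kinj: "k a = k b \<longleftrightarrow> a = b" if "a < t" "b < t" for a b
    using ks that by (metis one_neq_zero)
  have "(\<Sum>c\<in>K - C. inner (m (u (k l) c) (v (k l') c)) (\<Sum>j<r. s l'' j *\<^sub>R g j c))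
      = (\<Sum>c\<in>K. inner (m (u (k l) c) (v (k l') c)) (\<Sum>j<r. s l'' j *\<^sub>R g j c))"
    by (rule wit_K_C[OF bil fin C]) (use sC l'' in auto)
  also have "\<dots> = (\<Sum>c\<in>K. \<Sum>j<r. s l'' j * inner (m (u (k l) c) (v (k l') c)) (g j c))"
    by (simp add: inner_sum_right)
  also have "\<dots> = (\<Sum>j<r. s l'' j * (\<Sum>c\<in>K. inner (m (u (k l) c) (v (k l') c)) (g j c)))"
    by (subst sum.swap) (simp add: sum_distrib_left)
  also have "\<dots> = (\<Sum>j<r. s l'' j * (if k l = k l' \<and> k l' = j then 1 else 0))"
    by (rule sum.cong[OF refl]) (use W kr[OF l] kr[OF l'] in \<open>simp add: wit_def\<close>)
  also have "\<dots> = (if k l = k l' then s l'' (k l') else 0)"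
  proof -
    have "(\<Sum>j<r. s l'' j * (if k l = k l' \<and> k l' = j then 1 else 0)) = (\<Sum>j<r. s l'' j * (if k l = j \<and> j = k l' then 1 else 0))"
      by (rule sum.cong) auto
    then show ?thesis using delta_sum[OF kr[OF l'], of "s l''" "k l"] by simp
  qed
  also have "\<dots> = (if l = l' \<and> l' = l'' then 1 else 0)"
    using kinj[OF l l'] ks l' l'' by auto
  finally show "(\<Sum>c\<in>K - C. inner (m (u (k l) c) (v (k l') c)) (\<Sum>j<r. s l'' j *\<^sub>R g j c))
      = (if l = l' \<and> l' = l'' then 1 else 0)" .
qed


definition dl :: "nat \<Rightarrow> 'a::euclidean_space \<Rightarrow> nat \<Rightarrow> 'a" where
  "dl c b = (\<lambda>c'. if c' = c then b else 0)"

lemma XC_span: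
  fixes w :: "nat \<Rightarrow> 'a::euclidean_space"
  assumes fC: "finite C" and w: "\<And>c. c \<notin> C \<Longrightarrow> w c = 0"
  shows "w \<in> span ((\<lambda>(c,b). dl c b) ` (C \<times> Basis))"
proof -
  have eq: "w = (\<Sum>p\<in>C \<times> Basis. inner (w (fst p)) (snd p) *\<^sub>R dl (fst p) (snd p))"
  proof
    fix c'
    have "(\<Sum>p\<in>C \<times> Basis. inner (w (fst p)) (snd p) *\<^sub>R dl (fst p) (snd p)) c'
        = (\<Sum>p\<in>C \<times> Basis. inner (w (fst p)) (snd p) *\<^sub>R dl (fst p) (snd p) c')"
      using fC by (simp add: fsum_apply fscale_apply)
    also have "\<dots> = (\<Sum>c\<in>C. \<Sum>b\<in>Basis. inner (w c) b *\<^sub>R dl c b c')"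
      unfolding sum.cartesian_product by (simp add: case_prod_beta)
    also have "\<dots> = (\<Sum>c\<in>C. if c = c' then w c' else 0)"
    proof (rule sum.cong[OF refl])
      fix c assume "c \<in> C"
      show "(\<Sum>b\<in>Basis. inner (w c) b *\<^sub>R dl c b c') = (if c = c' then w c' else 0)"
        by (cases "c = c'") (auto simp: dl_def euclidean_representation)
    qed
    also have "\<dots> = w c'" using fC w by (auto simp: sum.delta')
    finally show "w c' = (\<Sum>p\<in>C \<times> Basis. inner (w (fst p)) (snd p) *\<^sub>R dl (fst p) (snd p)) c'" by simp
  qed
  have mem: "dl (fst p) (snd p) \<in> (\<lambda>(c,b). dl c b) ` (C \<times> Basis)" if "p \<in> C \<times> Basis" for p
    by (rule rev_image_eqI[OF that]) (simp add: case_prod_beta)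
  show ?thesis
    by (subst eq, intro span_sum span_scale span_base mem)
qed

lemma card_XF: "finite C \<Longrightarrow> card ((\<lambda>(c,b). dl c b) ` (C \<times> (Basis :: 'a::euclidean_space set))) \<le> card C * DIM('a)"
  using card_image_le[of "C \<times> (Basis :: 'a set)" "\<lambda>(c,b). dl c b"] by (simp add: card_cartesian_product)


lemma sylv:
  fixes m :: "'a::euclidean_space \<Rightarrow> 'a \<Rightarrow> 'a"
  assumes DA: "real_division_algebra m" and W: "wit m K r u v g" and fin: "finite K" and r: "0 < r"
  defines "C \<equiv> {c\<in>K. u (r-1) c \<noteq> 0}"
  shows "2*r \<le> dim {b\<in>R0 r. \<forall>c\<in>C. (\<Sum>j<r. b j *\<^sub>R v j c) = 0}
              + dim {b\<in>R0 r. \<forall>c\<in>C. (\<Sum>j<r. b j *\<^sub>R g j c) = 0} + card C * DIM('a) + 1"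
proof -
  have bil: "bilinear m" and bij: "\<And>a. a \<noteq> 0 \<Longrightarrow> bij (m a)"
    using DA unfolding real_division_algebra_def by auto
  define Vsp where "Vsp = {b\<in>R0 r. \<forall>c\<in>C. (\<Sum>j<r. b j *\<^sub>R v j c) = 0}"
  define Gsp where "Gsp = {b\<in>R0 r. \<forall>c\<in>C. (\<Sum>j<r. b j *\<^sub>R g j c) = 0}"
  define x where "x = u (r-1)"
  have fC: "finite C" and CK: "C \<subseteq> K" using fin unfolding C_def by auto
  define LV where "LV b = (\<lambda>c. if c \<in> C then m (x c) (\<Sum>j<r. b j *\<^sub>R v j c) else 0)" for b :: "nat \<Rightarrow> real"
  define GC where "GC b = (\<lambda>c. if c \<in> C then (\<Sum>j<r. b j *\<^sub>R g j c) else 0)" for b :: "nat \<Rightarrow> real"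
  have linLV: "linear LV"
  proof (rule linearI)
    fix b1 b2 :: "nat \<Rightarrow> real" and c :: real
    show "LV (b1 + b2) = LV b1 + LV b2"
      by (rule ext) (simp add: LV_def plus_fun_def scaleR_add_left sum.distrib bilinear_radd[OF bil])
    show "LV (c *\<^sub>R b1) = c *\<^sub>R LV b1"
      by (rule ext) (simp add: LV_def fscale_apply scaleR_sum_right bil_rsum[OF bil] bilinear_rmul[OF bil])
  qed
  have linGC: "linear GC"
  proof (rule linearI)
    fix b1 b2 :: "nat \<Rightarrow> real" and c :: real
    show "GC (b1 + b2) = GC b1 + GC b2"
      by (rule ext) (simp add: GC_def plus_fun_def scaleR_add_left sum.distrib)
    show "GC (c *\<^sub>R b1) = c *\<^sub>R GC b1"
      by (rule ext) (simp add: GC_def fscale_apply scaleR_sum_right)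
  qed
  define R1 where "R1 = {b\<in>R0 r. b (r-1) = 0}"
  have subR1: "subspace R1" using subspace_R0[of r] unfolding R1_def subspace_def
    by (auto simp: fscale_apply)
  have R1R0: "R1 \<subseteq> R0 r" unfolding R1_def by auto
  define U1 where "U1 = LV ` R1"
  define U2 where "U2 = GC ` R0 r"
  define F where "F = (\<lambda>(c,b). dl c b) ` (C \<times> (Basis :: 'a set))"
  have subU1: "subspace U1" unfolding U1_def by (rule linear_subspace_image[OF linLV subR1])
  have subU2: "subspace U2" unfolding U2_def by (rule linear_subspace_image[OF linGC subspace_R0])
  have U1F: "U1 \<subseteq> span F" unfolding U1_def F_def
    by (auto intro!: XC_span[OF fC] simp: LV_def)
  have U2F: "U2 \<subseteq> span F" unfolding U2_def F_def
    by (auto intro!: XC_span[OF fC] simp: GC_def)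
  have finF: "finite F" unfolding F_def using fC by simp
  have pairC: "(\<Sum>c\<in>C. inner (m (x c) (v j c)) (g k c)) = (if r - 1 = j \<and> j = k then 1 else 0)"
    if "j < r" "k < r" for j k
  proof -
    have "(\<Sum>c\<in>C. inner (m (x c) (v j c)) (g k c)) = (\<Sum>c\<in>K. inner (m (x c) (v j c)) (g k c))"
    proof (rule sum.mono_neutral_left[OF fin CK], intro ballI)
      fix c assume "c \<in> K - C"
      then have "x c = 0" unfolding C_def x_def by auto
      then show "inner (m (x c) (v j c)) (g k c) = 0" by (simp add: bilinear_lzero[OF bil])
    qed
    also have "\<dots> = (if r - 1 = j \<and> j = k then 1 else 0)"
      using W that r unfolding wit_def x_def by simp
    finally show ?thesis .
  qed
  have triv: "w = 0" if w1: "w \<in> U1" and w2: "w \<in> U2" for w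
  proof -
    obtain b where b: "b \<in> R1" "w = LV b" using w1 unfolding U1_def by blast
    obtain y where y: "y \<in> R0 r" "w = GC y" using w2 unfolding U2_def by blast
    have "(\<Sum>c\<in>C. inner (w c) (w c)) = (\<Sum>c\<in>C. inner (m (x c) (\<Sum>j<r. b j *\<^sub>R v j c)) (\<Sum>k<r. y k *\<^sub>R g k c))"
    proof (rule sum.cong[OF refl])
      fix c assume "c \<in> C"
      then show "inner (w c) (w c) = inner (m (x c) (\<Sum>j<r. b j *\<^sub>R v j c)) (\<Sum>k<r. y k *\<^sub>R g k c)"
        using b(2) y(2) unfolding LV_def GC_def by (metis (no_types, lifting))
    qed
    also have "\<dots> = (\<Sum>j<r. \<Sum>k<r. b j * y k * (\<Sum>c\<in>C. inner (m (x c) (v j c)) (g k c)))"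
      by (rule pair_expand[OF bil])
    also have "\<dots> = 0"
    proof (intro sum.neutral ballI)
      fix j k assume j: "j \<in> {..<r}" and k: "k \<in> {..<r}"
      have "b (r - 1) = 0" using b(1) unfolding R1_def by auto
      then show "b j * y k * (\<Sum>c\<in>C. inner (m (x c) (v j c)) (g k c)) = 0"
        using pairC[of j k] j k by auto
    qed
    finally have s0: "(\<Sum>c\<in>C. inner (w c) (w c)) = 0" .
    have "\<forall>c\<in>C. inner (w c) (w c) = 0"
      using sum_nonneg_eq_0_iff[OF fC, of "\<lambda>c. inner (w c) (w c)"] s0 by simp
    then have "\<forall>c\<in>C. w c = 0" by simp
    moreover have "\<forall>c. c \<notin> C \<longrightarrow> w c = 0" using y(2) unfolding GC_def by simp
    ultimately show "w = 0" by (auto simp: fun_eq_iff)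
  qed
  have UU: "dim U1 + dim U2 \<le> card F"
    by (rule gl_trivial_inter[OF subU1 subU2 U1F U2F finF triv])
  have cF: "card F \<le> card C * DIM('a)" unfolding F_def by (rule card_XF[OF fC])
  have dR1: "r - 1 \<le> dim R1"
  proof -
    have "ee ` {..<r-1} \<subseteq> R1" unfolding R1_def R0_def ee_def by auto
    from dim_ge_R0[OF this R1R0 finite_lessThan] show ?thesis by simp
  qed
  have dR0: "r \<le> dim (R0 r)"
  proof -
    have "ee ` {..<r} \<subseteq> R0 r" unfolding R0_def ee_def by auto
    from dim_ge_R0[OF this subset_refl finite_lessThan] show ?thesis by simp
  qed
  have rn1: "dim R1 \<le> dim U1 + dim {b\<in>R1. LV b = 0}"
    unfolding U1_def using gl_rank_nullity[OF subR1 _ _ linLV, of "ee ` {..<r}"] R1R0 R0_span by blast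
  have kerV: "{b\<in>R1. LV b = 0} \<subseteq> Vsp"
  proof
    fix b assume "b \<in> {b\<in>R1. LV b = 0}"
    then have b: "b \<in> R0 r" "LV b = 0" unfolding R1_def by auto
    have "(\<Sum>j<r. b j *\<^sub>R v j c) = 0" if c: "c \<in> C" for c
    proof -
      have "LV b c = 0" using b(2) by simp
      then have e1: "m (x c) (\<Sum>j<r. b j *\<^sub>R v j c) = m (x c) 0"
        using c unfolding LV_def by (simp add: bilinear_rzero[OF bil])
      have "x c \<noteq> 0" using c unfolding C_def x_def by auto
      then have "inj (m (x c))" using bij bij_is_inj by blast
      from injD[OF this e1] show ?thesis .
    qed
    then show "b \<in> Vsp" unfolding Vsp_def using b(1) by auto
  qed
  have VspR: "Vsp \<subseteq> R0 r" unfolding Vsp_def by auto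
  have dk1: "dim {b\<in>R1. LV b = 0} \<le> dim Vsp"
    by (rule gl_mono[OF kerV]) (use VspR R0_span in auto)
  have rn2: "dim (R0 r) \<le> dim U2 + dim {b\<in>R0 r. GC b = 0}"
    unfolding U2_def using gl_rank_nullity[OF subspace_R0 R0_span _ linGC] by blast
  have kerG: "{b\<in>R0 r. GC b = 0} = Gsp"
    unfolding Gsp_def GC_def by (auto simp: fun_eq_iff)
  have rn2': "dim (R0 r) \<le> dim U2 + dim Gsp" using rn2 kerG by simp
  show ?thesis
    using UU cF dR1 dR0 rn1 dk1 rn2' r unfolding Vsp_def[symmetric] Gsp_def[symmetric] by linarith
qed


lemma subspace_Wsp: "subspace {b\<in>R0 r. \<forall>c\<in>C. (\<Sum>j<r. b j *\<^sub>R w j c) = (0::'a::real_vector)}"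
proof -
  have sc: "(\<Sum>j<r. (c * x j) *\<^sub>R w j ca) = c *\<^sub>R (\<Sum>j<r. x j *\<^sub>R w j ca)" for c x ca
    by (simp add: scaleR_sum_right)
  show ?thesis
    using subspace_R0[of r] unfolding subspace_def
    by (auto simp: plus_fun_def fscale_apply scaleR_add_left sum.distrib sc)
qed

lemma core:
  fixes m :: "'a::euclidean_space \<Rightarrow> 'a \<Rightarrow> 'a"
  assumes DA: "real_division_algebra m" and ev: "even DIM('a)"
  shows "finite K \<Longrightarrow> wit m K r u v g \<Longrightarrow> 2*r \<le> DIM('a) * card K"
proof (induction "card K" arbitrary: K r u v g rule: less_induct)
  case less
  have bil: "bilinear m" using DA unfolding real_division_algebra_def by auto
  show ?case
  proof (cases "r = 0")
    case True then show ?thesis by simp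
  next
    case False
    then have r: "0 < r" by simp
    define C where "C = {c\<in>K. u (r-1) c \<noteq> 0}"
    have CK: "C \<subseteq> K" unfolding C_def by auto
    have fC: "finite C" using CK less.prems(1) finite_subset by blast
    have Cne: "C \<noteq> {}"
    proof
      assume "C = {}"
      then have "\<forall>c\<in>K. u (r-1) c = 0" unfolding C_def by auto
      then have "(\<Sum>c\<in>K. inner (m (u (r-1) c) (v (r-1) c)) (g (r-1) c)) = 0"
        by (simp add: bilinear_lzero[OF bil])
      moreover have "(\<Sum>c\<in>K. inner (m (u (r-1) c) (v (r-1) c)) (g (r-1) c)) = 1"
        using less.prems(2) r unfolding wit_def by simp
      ultimately show False by simp
    qed
    have cK: "card K = card (K - C) + card C"
      using card_Diff_subset[OF fC CK] card_mono[OF less.prems(1) CK] by simp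
    have cC: "card C > 0" using Cne fC by (simp add: card_gt_0_iff)
    have cZ: "card (K - C) < card K" using cK cC by simp
    have fZ: "finite (K - C)" using less.prems(1) by simp
    define Vsp where "Vsp = {b\<in>R0 r. \<forall>c\<in>C. (\<Sum>j<r. b j *\<^sub>R v j c) = 0}"
    define Gsp where "Gsp = {b\<in>R0 r. \<forall>c\<in>C. (\<Sum>j<r. b j *\<^sub>R g j c) = 0}"
    have "2 * dim Vsp \<le> DIM('a) * card (K - C)"
    proof -
      have sub: "subspace Vsp" unfolding Vsp_def by (rule subspace_Wsp)
      have VR: "Vsp \<subseteq> R0 r" unfolding Vsp_def by auto
      obtain k s where ks: "\<forall>l<dim Vsp. s l \<in> Vsp"
        "\<forall>l<dim Vsp. \<forall>l'<dim Vsp. s l (k l') = (if l = l' then 1 else 0)"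
        using echelon[OF sub VR le_refl] by blast
      have "wit m (K - C) (dim Vsp) (\<lambda>l. u (k l)) (\<lambda>l c. \<Sum>j<r. s l j *\<^sub>R v j c) (\<lambda>l. g (k l))"
        by (rule redV[OF bil less.prems(2) less.prems(1) CK]) (use ks in \<open>auto simp: Vsp_def\<close>)
      then show ?thesis using less.hyps[OF cZ fZ] by blast
    qed
    moreover have "2 * dim Gsp \<le> DIM('a) * card (K - C)"
    proof -
      have sub: "subspace Gsp" unfolding Gsp_def by (rule subspace_Wsp)
      have GR: "Gsp \<subseteq> R0 r" unfolding Gsp_def by auto
      obtain k s where ks: "\<forall>l<dim Gsp. s l \<in> Gsp"
        "\<forall>l<dim Gsp. \<forall>l'<dim Gsp. s l (k l') = (if l = l' then 1 else 0)"
        using echelon[OF sub GR le_refl] by blast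
      have "wit m (K - C) (dim Gsp) (\<lambda>l. u (k l)) (\<lambda>l. v (k l)) (\<lambda>l c. \<Sum>j<r. s l j *\<^sub>R g j c)"
        by (rule redG[OF bil less.prems(2) less.prems(1) CK]) (use ks in \<open>auto simp: Gsp_def\<close>)
      then show ?thesis using less.hyps[OF cZ fZ] by blast
    qed
    moreover have "2*r \<le> dim Vsp + dim Gsp + card C * DIM('a) + 1"
      using sylv[OF DA less.prems(2) less.prems(1) r] unfolding Vsp_def Gsp_def C_def by blast
    ultimately have "2*r \<le> DIM('a) * card K + 1"
      using cK by (simp add: algebra_simps)
    moreover have "even (DIM('a) * card K)" using ev by simp
    ultimately show ?thesis by (metis dvd_triv_left le_SucE even_Suc Suc_eq_plus1)
  qed
qed


lemma dl_repr:
  fixes w :: "nat \<Rightarrow> 'a::euclidean_space"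
  assumes fC: "finite C" and w: "\<And>c. c \<notin> C \<Longrightarrow> w c = 0"
  shows "w = (\<Sum>p\<in>C \<times> Basis. inner (w (fst p)) (snd p) *\<^sub>R dl (fst p) (snd p))"
proof
  fix c'
  have "(\<Sum>p\<in>C \<times> Basis. inner (w (fst p)) (snd p) *\<^sub>R dl (fst p) (snd p)) c'
      = (\<Sum>p\<in>C \<times> Basis. inner (w (fst p)) (snd p) *\<^sub>R dl (fst p) (snd p) c')"
    using fC by (simp add: fsum_apply fscale_apply)
  also have "\<dots> = (\<Sum>c\<in>C. \<Sum>b\<in>Basis. inner (w c) b *\<^sub>R dl c b c')"
    unfolding sum.cartesian_product by (simp add: case_prod_beta)
  also have "\<dots> = (\<Sum>c\<in>C. if c = c' then w c' else 0)"
  proof (rule sum.cong[OF refl])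
    fix c assume "c \<in> C"
    show "(\<Sum>b\<in>Basis. inner (w c) b *\<^sub>R dl c b c') = (if c = c' then w c' else 0)"
      by (cases "c = c'") (auto simp: dl_def euclidean_representation)
  qed
  also have "\<dots> = w c'" using fC w by (auto simp: sum.delta')
  finally show "w c' = (\<Sum>p\<in>C \<times> Basis. inner (w (fst p)) (snd p) *\<^sub>R dl (fst p) (snd p)) c'" by simp
qed

lemma tuples_closed:
  "0 \<in> tuples n" "x \<in> tuples n \<Longrightarrow> y \<in> tuples n \<Longrightarrow> x + y \<in> tuples n"
  "x \<in> tuples n \<Longrightarrow> c *\<^sub>R x \<in> tuples n"
  unfolding tuples_def by (auto simp: fscale_apply)

lemma tuples_sum: "finite I \<Longrightarrow> (\<And>i. i \<in> I \<Longrightarrow> f i \<in> tuples n) \<Longrightarrow> (\<Sum>i\<in>I. f i) \<in> tuples n"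
  by (induction I rule: finite_induct) (auto intro: tuples_closed)

lemma psi_sum:
  assumes add: "\<forall>x\<in>tuples n. \<forall>y\<in>tuples n. p (x + y) = p x + p y"
    and hom: "\<forall>c. \<forall>x\<in>tuples n. p (c *\<^sub>R x) = c * p x"
    and fin: "finite I" and f: "\<And>i. i \<in> I \<Longrightarrow> f i \<in> tuples n"
  shows "p (\<Sum>i\<in>I. a i *\<^sub>R f i) = (\<Sum>i\<in>I. a i * p (f i))"
  using fin f
proof (induction I rule: finite_induct)
  case empty
  have "p 0 = 0" using hom tuples_closed(1) by (metis mult_zero_left scaleR_zero_left)
  then show ?case by (simp only: sum.empty)
next
  case (insert i I)
  have s: "(\<Sum>i\<in>I. a i *\<^sub>R f i) \<in> tuples n"
    using insert by (intro tuples_sum tuples_closed) auto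
  have fi: "f i \<in> tuples n" using insert by auto
  have e1: "(\<Sum>j\<in>insert i I. a j *\<^sub>R f j) = a i *\<^sub>R f i + (\<Sum>j\<in>I. a j *\<^sub>R f j)"
    by (rule sum.insert[OF insert(1,2)])
  have e2: "(\<Sum>j\<in>insert i I. a j * p (f j)) = a i * p (f i) + (\<Sum>j\<in>I. a j * p (f j))"
    by (rule sum.insert[OF insert(1,2)])
  have h1: "p (a i *\<^sub>R f i + (\<Sum>j\<in>I. a j *\<^sub>R f j)) = p (a i *\<^sub>R f i) + p (\<Sum>j\<in>I. a j *\<^sub>R f j)"
    using add s tuples_closed(3)[OF fi] by blast
  have h2: "p (a i *\<^sub>R f i) = a i * p (f i)" using hom fi by blast
  have h3: "p (\<Sum>j\<in>I. a j *\<^sub>R f j) = (\<Sum>j\<in>I. a j * p (f j))"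
    by (rule insert.IH) (use insert.prems in blast)
  show ?case unfolding e1 e2 h1 h2 h3 by (rule refl)
qed

theorem theorem5p3:
  fixes m :: "'a::euclidean_space \<Rightarrow> 'a \<Rightarrow> 'a" and n :: nat
  assumes "real_division_algebra m"
    and "DIM('a) \<ge> 2"
  shows "real (subrank (tuples n) (tuples n) (tuples n) (cw_mult m))
           \<le> real n * (real DIM('a) / 2)"
proof -
  note DA = assms(1)
  have bil: "bilinear m" using DA unfolding real_division_algebra_def by auto
  have ev: "even DIM('a)" by (rule DA_even[OF assms])
  define P where "P = subrank_witness (tuples n) (tuples n) (tuples n) (cw_mult m)"
  have bound: "2 * r \<le> DIM('a) * n" if Pr: "P r" for r
  proof -
    obtain u v psi where
      uv: "\<forall>i<r. u i \<in> tuples n \<and> v i \<in> tuples n" and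
      lin: "\<forall>k<r. (\<forall>x\<in>tuples n. \<forall>y\<in>tuples n. psi k (x + y) = psi k x + psi k y) \<and>
               (\<forall>c. \<forall>x\<in>tuples n. psi k (c *\<^sub>R x) = c * psi k x)" and
      eq: "\<forall>a b :: nat \<Rightarrow> real. \<forall>k<r.
            psi k (cw_mult m (\<Sum>i<r. a i *\<^sub>R u i) (\<Sum>i<r. b i *\<^sub>R v i)) = a k * b k"
      using Pr unfolding P_def subrank_witness_def by blast
    have sel: "(\<Sum>i'<r. ee i i' *\<^sub>R w i') = w i" if "i < r" for i and w :: "nat \<Rightarrow> nat \<Rightarrow> 'a"
    proof -
      have "(\<Sum>i'<r. ee i i' *\<^sub>R w i') = (\<Sum>i'<r. if i' = i then w i else 0)"
        by (rule sum.cong) (auto simp: ee_def)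
      then show ?thesis using that by simp
    qed
    have delta: "psi k (cw_mult m (u i) (v j)) = (if i = j \<and> j = k then 1 else 0)"
      if "i < r" "j < r" "k < r" for i j k
      using eq[rule_format, of k "ee i" "ee j"] that sel[of i u] sel[of j v] by (auto simp: ee_def)
    define g where "g k c = (\<Sum>b\<in>Basis. psi k (dl c b) *\<^sub>R b)" for k c
    have repr: "psi k w = (\<Sum>c<n. inner (w c) (g k c))" if k: "k < r" and w: "w \<in> tuples n" for k w
    proof -
      have w0: "\<And>c. c \<notin> {..<n} \<Longrightarrow> w c = 0" using w unfolding tuples_def by auto
      have dlt: "dl (fst p) (snd p) \<in> tuples n" if "p \<in> {..<n} \<times> Basis" for p
        using that unfolding tuples_def dl_def by auto
      have "psi k w = psi k (\<Sum>p\<in>{..<n} \<times> Basis. inner (w (fst p)) (snd p) *\<^sub>R dl (fst p) (snd p))"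
        using dl_repr[OF finite_lessThan w0] by simp
      also have "\<dots> = (\<Sum>p\<in>{..<n} \<times> Basis. inner (w (fst p)) (snd p) * psi k (dl (fst p) (snd p)))"
      proof -
        have addk: "\<forall>x\<in>tuples n. \<forall>y\<in>tuples n. psi k (x + y) = psi k x + psi k y" using lin k by blast
        have homk: "\<forall>c. \<forall>x\<in>tuples n. psi k (c *\<^sub>R x) = c * psi k x" using lin k by blast
        show ?thesis by (rule psi_sum[OF addk homk _ dlt]) simp_all
      qed
      also have "\<dots> = (\<Sum>c<n. \<Sum>b\<in>Basis. inner (w c) b * psi k (dl c b))"
        unfolding sum.cartesian_product by (simp add: case_prod_beta)
      also have "\<dots> = (\<Sum>c<n. inner (w c) (g k c))"
        unfolding g_def by (simp add: inner_sum_right mult.commute)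
      finally show ?thesis .
    qed
    have W: "wit m {..<n} r u v g"
      unfolding wit_def
    proof (intro allI impI)
      fix i j k assume i: "i < r" and j: "j < r" and k: "k < r"
      have ct: "cw_mult m (u i) (v j) \<in> tuples n"
        using uv i unfolding tuples_def cw_mult_def by (auto simp: bilinear_lzero[OF bil])
      have "(\<Sum>c<n. inner (m (u i c) (v j c)) (g k c)) = psi k (cw_mult m (u i) (v j))"
        using repr[OF k ct] unfolding cw_mult_def by simp
      then show "(\<Sum>c<n. inner (m (u i c) (v j c)) (g k c)) = (if i = j \<and> j = k then 1 else 0)"
        using delta[OF i j k] by simp
    qed
    show ?thesis using core[OF DA ev finite_lessThan W] by simp
  qed
  have P0: "P 0" unfolding P_def subrank_witness_def by simp
  have bound2: "y \<le> DIM('a) * n" if "P y" for y using bound[OF that] by simp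
  have "P (Greatest P)" by (rule GreatestI_nat[of P 0, OF P0 bound2])
  then have "2 * Greatest P \<le> DIM('a) * n" by (rule bound)
  then have "2 * real (Greatest P) \<le> real DIM('a) * real n"
    by (metis of_nat_le_iff of_nat_mult of_nat_numeral)
  then show ?thesis unfolding subrank_def P_def[symmetric] by (simp add: mult.commute)
qed

end
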